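(* For $\epsilon\in\mathbb{R}$ let $$\Phi_{1,\epsilon}(x,y)=\left(\frac{-2\epsilon x^{2}+(1-\epsilon^{2})x-2\epsilon y^{2}-2\epsilon y}{D(x,y)},\ \frac{-2\epsilon^{2}x^{2}+2\epsilon x-2\epsilon^{2}y^{2}+(1-\epsilon^{2})y}{D(x,y)}\right),$$ $D(x,y)=4\epsilon^{2}x^{2}+4\epsilon^{2}y^{2}+4\epsilon^{2}y+\epsilon^{2}-4\epsilon x+1$ (the KHK map of $\dot x=-y+x^2-y^2$, $\dot y=x(1+2y)$). For $h\in\mathcal{H}=\{h\leq -1\}\cup\{h\geq 0\}$ let $C_h=\{x^2+y^2-h(1+2y)=0\}$ and let $C_\infty=\{y=-1/2\}\cup\{\infty\}$. Then for every fixed $\epsilon\in\mathbb{R}$ and every $h\in\mathcal{H}\cup\{\infty\}$, the map $\Phi_{1,\epsilon}|_{C_h}$ is conjugate to a rotation with rotation number $$\rho_\pm(\epsilon)=\frac{1}{2\pi}\arg\left(\frac{1-\epsilon^2}{1+\epsilon^2}\pm i\,\frac{2\epsilon}{1+\epsilon^2}\right),$$ where $\rho_+$ holds for $h\geq 0$ (the circles surrounding $(0,0)$) and for $C_\infty$, and $\rho_-$ holds for $h\leq -1$ (the circles surrounding $(0,-1)$).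
   Context: $\arg$ takes values in $[0,2\pi)$. $C_\infty$ is the invariant line $y=-1/2$ completed with its point at infinity, a topological circle. *)

theory Defs
  imports "HOL-Complex_Analysis.Complex_Analysis"
begin

definition khk_den :: "real \<Rightarrow> real \<Rightarrow> real \<Rightarrow> real" where
  "khk_den e x y = 4*e^2*x^2 + 4*e^2*y^2 + 4*e^2*y + e^2 - 4*e*x + 1"

definition khk :: "real \<Rightarrow> real \<times> real \<Rightarrow> real \<times> real" where
  "khk e p = (let x = fst p; y = snd p in
     ((-2*e*x^2 + (1 - e^2)*x - 2*e*y^2 - 2*e*y) / khk_den e x y,
      (-2*e^2*x^2 + 2*e*x - 2*e^2*y^2 + (1 - e^2)*y) / khk_den e x y))"

definition curve :: "real \<Rightarrow> (real \<times> real) set" where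
  "curve h = {(x, y). x^2 + y^2 - h*(1 + 2*y) = 0}"

definition arg0 :: "complex \<Rightarrow> real" where
  "arg0 z = (if Arg z < 0 then Arg z + 2*pi else Arg z)"

definition rho_plus :: "real \<Rightarrow> real" where
  "rho_plus e = arg0 (Complex ((1 - e^2)/(1 + e^2)) (2*e/(1 + e^2))) / (2*pi)"

definition rho_minus :: "real \<Rightarrow> real" where
  "rho_minus e = arg0 (Complex ((1 - e^2)/(1 + e^2)) (- (2*e/(1 + e^2)))) / (2*pi)"

abbreviation S1 :: "complex set" where "S1 \<equiv> sphere 0 1"

text \<open>Phi restricted to a circle C (of centre c and radius r) is conjugate to the rotation
  with rotation number rho by an orientation preserving homeomorphism psi : C -> S^1
  (C oriented counterclockwise).\<close>
definition conj_rot_circle ::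
  "(real \<times> real) set \<Rightarrow> (real \<times> real \<Rightarrow> real \<times> real) \<Rightarrow> real \<Rightarrow> real \<times> real \<Rightarrow> real \<Rightarrow> bool" where
  "conj_rot_circle C F rho c r \<longleftrightarrow>
     (\<exists>psi. homeomorphic_map (top_of_set C) (top_of_set S1) psi \<and>
        winding_number (\<lambda>t. psi (fst c + r * cos (2*pi*t), snd c + r * sin (2*pi*t))) 0 = 1 \<and>
        (\<forall>p\<in>C. F p \<in> C \<and> psi (F p) = cis (2*pi*rho) * psi p))"

text \<open>The extended line R u {infinity} (None = infinity), with the one-point
  compactification topology.\<close>
definition extline_open :: "real option set \<Rightarrow> bool" where
  "extline_open U \<longleftrightarrow> open (Some -` U) \<and> (None \<in> U \<longrightarrow> bounded (Some -` (UNIV - U)))"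

definition extline :: "real option topology" where
  "extline = topology extline_open"

definition extline_loop :: "real \<Rightarrow> real option" where
  "extline_loop t = (if 0 < t \<and> t < 1 then Some (tan (pi*(t - 1/2))) else None)"

text \<open>Phi on C_infinity = {y = -1/2} u {infinity}, in the x-coordinate, extended by continuity.\<close>
definition khk_inf :: "real \<Rightarrow> real option \<Rightarrow> real option" where
  "khk_inf e q = (case q of
      None \<Rightarrow> (if e = 0 then None else Some (-1/(2*e)))
    | Some x \<Rightarrow> (if khk_den e x (-1/2) = 0 then None else Some (fst (khk e (x, -1/2)))))"

definition conj_rot_inf :: "(real option \<Rightarrow> real option) \<Rightarrow> real \<Rightarrow> bool" where
  "conj_rot_inf F rho \<longleftrightarrow>
     (\<exists>psi. homeomorphic_map extline (top_of_set S1) psi \<and>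
        winding_number (psi \<circ> extline_loop) 0 = 1 \<and>
        (\<forall>q. psi (F q) = cis (2*pi*rho) * psi q))"

end

theory Submission
  imports Defs
begin

definition cz :: "real \<times> real \<Rightarrow> complex" where
  "cz p = complex_of_real (fst p) + \<i> * complex_of_real (snd p)"

lemma Re_cz[simp]: "Re (cz p) = fst p" and Im_cz[simp]: "Im (cz p) = snd p"
  by (simp_all add: cz_def)

definition dn :: "real \<Rightarrow> complex \<Rightarrow> complex" where
  "dn e z = 1 - \<i> * of_real e - 2 * of_real e * z"

definition Phc :: "real \<Rightarrow> complex \<Rightarrow> complex" where
  "Phc e z = (1 + \<i> * of_real e) * z / dn e z"

lemma den_eq: "khk_den e (Re z) (Im z) = (Re (dn e z))^2 + (Im (dn e z))^2"
  by (simp add: khk_den_def dn_def power2_eq_square algebra_simps)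

lemma khk_eq: "khk e p = (Re (Phc e (cz p)), Im (Phc e (cz p)))"
proof -
  obtain x y where p: "p = (x,y)" by (cases p)
  have d: "khk_den e x y = (Re (dn e (cz p)))^2 + (Im (dn e (cz p)))^2"
    using den_eq[of e "cz p"] p by simp
  show ?thesis unfolding khk_def Let_def Phc_def p
    using d[unfolded p]
    by (simp add: Re_divide Im_divide dn_def cz_def power2_eq_square algebra_simps)
qed


lemma dn_zero: "dn e z = 0 \<Longrightarrow> Im z = -1/2"
proof -
  assume h: "dn e z = 0"
  have r: "1 - 2*e*Re z = 0" and i: "- e - 2*e*Im z = 0"
    using arg_cong[OF h, of Re] arg_cong[OF h, of Im] by (simp_all add: dn_def)
  have "e \<noteq> 0" using r by auto
  have "e * (2*Im z + 1) = 0" using i by (simp add: algebra_simps)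
  with \<open>e \<noteq> 0\<close> show ?thesis by simp
qed

lemma Phc_plus_i: "dn e z \<noteq> 0 \<Longrightarrow> Phc e z + \<i> = (1 - \<i> * of_real e) * (z + \<i>) / dn e z"
  by (simp add: Phc_def dn_def field_simps)

definition lam :: "real \<Rightarrow> complex" where "lam e = (1 + \<i> * of_real e) / (1 - \<i> * of_real e)"

lemma one_m_ie: "1 - \<i> * complex_of_real e \<noteq> 0"
  by (simp add: complex_eq_iff)
lemma one_p_ie: "1 + \<i> * complex_of_real e \<noteq> 0"
  by (simp add: complex_eq_iff)

lemma ratio1: "dn e z \<noteq> 0 \<Longrightarrow> z + \<i> \<noteq> 0 \<Longrightarrow> Phc e z / (Phc e z + \<i>) = lam e * (z / (z + \<i>))"
proof -
  assume d: "dn e z \<noteq> 0" and z: "z + \<i> \<noteq> 0"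
  have "Phc e z / (Phc e z + \<i>) = ((1 + \<i> * of_real e) * z / dn e z) / ((1 - \<i> * of_real e) * (z + \<i>) / dn e z)"
    using d by (simp add: Phc_plus_i) (simp add: Phc_def)
  also have "\<dots> = ((1 + \<i> * of_real e) * z) / ((1 - \<i> * of_real e) * (z + \<i>))"
    using d by simp
  also have "\<dots> = lam e * (z / (z + \<i>))" unfolding lam_def by simp
  finally show ?thesis .
qed

lemma ratio2: "dn e z \<noteq> 0 \<Longrightarrow> z \<noteq> 0 \<Longrightarrow> (Phc e z + \<i>) / Phc e z = ((z + \<i>) / z) / lam e"
proof -
  assume d: "dn e z \<noteq> 0" and z: "z \<noteq> 0"
  have "(Phc e z + \<i>) / Phc e z = ((1 - \<i> * of_real e) * (z + \<i>) / dn e z) / ((1 + \<i> * of_real e) * z / dn e z)"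
    using d by (simp add: Phc_plus_i) (simp add: Phc_def)
  also have "\<dots> = ((1 - \<i> * of_real e) * (z + \<i>)) / ((1 + \<i> * of_real e) * z)"
    using d by simp
  also have "\<dots> = ((z + \<i>) / z) / lam e" unfolding lam_def by (simp add: mult.commute)
  finally show ?thesis .
qed

lemma lam_Complex: "Complex ((1 - e^2)/(1 + e^2)) (2*e/(1 + e^2)) = lam e"
proof -
  have p: "1 + e^2 \<noteq> 0" by (smt (verit) zero_le_power2)
  have a1: "e * (e * (e * e)) = (e*e)*(e*e)" by simp
  have a2: "(e*e)*(e*e) \<ge> 0" "e * (e * 2) \<ge> 0" by simp_all
  have q: "1 + (e * (e * (e * e)) + e * (e * 2)) \<noteq> 0" using a1 a2 by linarith
  have "Complex ((1 - e^2)/(1 + e^2)) (2*e/(1 + e^2)) * (1 - \<i> * of_real e) = 1 + \<i> * of_real e"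
    using p q by (simp add: complex_eq_iff field_simps power2_eq_square)
  then show ?thesis unfolding lam_def using one_m_ie[of e]
    by (simp add: eq_divide_eq)
qed

lemma norm_lam: "norm (lam e) = 1"
proof -
  have "cmod (1 + \<i> * of_real e) = cmod (1 - \<i> * of_real e)" by (simp add: cmod_def)
  then show ?thesis unfolding lam_def norm_divide using one_m_ie[of e] by simp
qed

lemma cis_arg0: "norm z = 1 \<Longrightarrow> cis (arg0 z) = z"
proof -
  assume n: "norm z = 1"
  then have "z \<noteq> 0" by auto
  then have "cis (Arg z) = z" using n by (simp add: cis_Arg sgn_div_norm)
  moreover have "cis (Arg z + 2*pi) = cis (Arg z)" by (simp add: cis.ctr)
  ultimately show ?thesis unfolding arg0_def by auto
qed

lemma cis_rho_plus: "cis (2*pi*rho_plus e) = lam e"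
  unfolding rho_plus_def lam_Complex using norm_lam[of e] by (simp add: cis_arg0)

lemma cis_rho_minus: "cis (2*pi*rho_minus e) = 1 / lam e"
proof -
  have "Complex ((1 - e^2)/(1 + e^2)) (- (2*e/(1 + e^2))) = cnj (lam e)"
    unfolding lam_Complex[symmetric] by (simp add: complex_eq_iff)
  also have "\<dots> = 1 / lam e" using complex_div_cnj[of 1 "lam e"] norm_lam[of e] by simp
  finally have L: "Complex ((1 - e^2)/(1 + e^2)) (- (2*e/(1 + e^2))) = 1 / lam e" .
  show ?thesis unfolding rho_minus_def L using norm_lam[of e] by (simp add: cis_arg0 norm_divide)
qed


lemma cz_ReIm[simp]: "cz (Re z, Im z) = z"
  by (simp add: cz_def complex_eq_iff)
lemma ReIm_cz[simp]: "(Re (cz p), Im (cz p)) = p"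
  by simp

lemma cont_cz[continuous_intros]: "continuous_on S cz"
  unfolding cz_def by (intro continuous_intros)

lemma mem_curve: "p \<in> curve h \<longleftrightarrow> (Re (cz p))^2 + (Im (cz p))^2 - h*(1 + 2*Im (cz p)) = 0"
  by (cases p) (simp add: curve_def)

lemma sqrt_iff: "x \<ge> 0 \<Longrightarrow> q \<ge> 0 \<Longrightarrow> (x = sqrt q \<longleftrightarrow> x^2 = q)"
  by (metis real_sqrt_abs real_sqrt_pow2 abs_of_nonneg)

lemma key:
  fixes z :: complex
  assumes h1: "1 + h \<noteq> 0" and q: "h/(1+h) > 0" and zi: "z + \<i> \<noteq> 0"
  shows "(Re z)^2 + (Im z)^2 - h*(1 + 2*Im z) = 0 \<longleftrightarrow> norm (z/(z+\<i>)) = sqrt (h/(1+h))"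
proof -
  have n: "(Re (z + \<i>))^2 + (Im (z+\<i>))^2 \<noteq> 0" using zi
    by (metis cmod_power2 power_eq_0_iff zero_eq_power2 norm_eq_zero)
  have "norm (z/(z+\<i>)) = sqrt (h/(1+h)) \<longleftrightarrow> (norm (z/(z+\<i>)))^2 = h/(1+h)"
    using q by (intro sqrt_iff) auto
  also have "(norm (z/(z+\<i>)))^2 = ((Re z)^2 + (Im z)^2) / ((Re (z + \<i>))^2 + (Im (z+\<i>))^2)"
    by (simp add: norm_divide power_divide cmod_power2)
  also have "\<dots> = h/(1+h) \<longleftrightarrow> ((Re z)^2 + (Im z)^2) * (1+h) = h * ((Re (z + \<i>))^2 + (Im (z+\<i>))^2)"
    using n h1 by (simp add: field_simps)
  also have "\<dots> \<longleftrightarrow> (Re z)^2 + (Im z)^2 - h*(1 + 2*Im z) = 0"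
    by (simp add: power2_eq_square algebra_simps)
  finally show ?thesis by simp
qed

lemma seg:
  fixes a b :: complex
  assumes "b \<noteq> 0" and "\<And>k. k \<ge> 0 \<Longrightarrow> a \<noteq> - (of_real k) * b"
  shows "0 \<notin> closed_segment a b"
proof
  assume "0 \<in> closed_segment a b"
  then obtain u where u: "0 \<le> u" "u \<le> 1" "(1 - u) *\<^sub>R a + u *\<^sub>R b = 0"
    unfolding closed_segment_def by auto
  show False
  proof (cases "u = 1")
    case True then show ?thesis using u assms(1) by simp
  next
    case False
    then have "1 - u > 0" using u by simp
    have "a = - of_real (u/(1-u)) * b"
      using u(3) \<open>1 - u > 0\<close> by (simp add: scaleR_conv_of_real field_simps of_real_divide)
    then show ?thesis using assms(2)[of "u/(1-u)"] u \<open>1 - u > 0\<close> by simp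
  qed
qed

lemma curve_ne: "p \<in> curve h \<Longrightarrow> 1 + h \<noteq> 0 \<Longrightarrow> cz p + \<i> \<noteq> 0"
proof
  assume p: "p \<in> curve h" and h: "1 + h \<noteq> 0" and z: "cz p + \<i> = 0"
  have "fst p = 0" "snd p = -1" using arg_cong[OF z, of Re] arg_cong[OF z, of Im] by simp_all
  then show False using p h by (cases p) (simp add: curve_def)
qed

lemma curve_ne0: "p \<in> curve h \<Longrightarrow> h \<noteq> 0 \<Longrightarrow> cz p \<noteq> 0"
proof
  assume p: "p \<in> curve h" and h: "h \<noteq> 0" and z: "cz p = 0"
  then have "Re (cz p) = 0" "Im (cz p) = 0" by auto
  then show False using p h by (simp add: mem_curve)
qed

lemma curve_dn: "p \<in> curve h \<Longrightarrow> dn e (cz p) \<noteq> 0"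
proof
  assume p: "p \<in> curve h" and d: "dn e (cz p) = 0"
  have "Im (cz p) = -1/2" using dn_zero[OF d] .
  then have "(Re (cz p))^2 + 1/4 = 0" using p by (simp add: mem_curve power2_eq_square)
  moreover have "(Re (cz p))^2 \<ge> 0" by simp
  ultimately show False by linarith
qed

definition rho :: "real \<Rightarrow> real" where "rho h = sqrt (h/(1+h))"

lemma curve_norm:
  assumes h1: "1 + h \<noteq> 0" and q: "h/(1+h) > 0"
  shows "p \<in> curve h \<longleftrightarrow> cz p + \<i> \<noteq> 0 \<and> norm (cz p / (cz p + \<i>)) = rho h"
  using key[OF h1 q, of "cz p"] curve_ne[of p h] h1 unfolding rho_def mem_curve by blast

lemma curve_norm_c:
  assumes h1: "1 + h \<noteq> 0" and q: "h/(1+h) > 0" and zi: "z + \<i> \<noteq> 0" and n: "norm (z / (z + \<i>)) = rho h"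
  shows "(Re z, Im z) \<in> curve h"
  using curve_norm[OF h1 q, of "(Re z, Im z)"] zi n by simp

lemma conj_common:
  assumes h1: "1 + h \<noteq> 0" and q: "h/(1+h) > 0" and p: "p \<in> curve h"
  shows "khk e p \<in> curve h" "cz (khk e p) = Phc e (cz p)" "Phc e (cz p) + \<i> \<noteq> 0"
    "Phc e (cz p) / (Phc e (cz p) + \<i>) = lam e * (cz p / (cz p + \<i>))"
proof -
  have d: "dn e (cz p) \<noteq> 0" using curve_dn[OF p] .
  have zi: "cz p + \<i> \<noteq> 0" using curve_ne[OF p h1] .
  show c: "cz (khk e p) = Phc e (cz p)" unfolding khk_eq by (simp add: cz_def complex_eq_iff)
  show ni: "Phc e (cz p) + \<i> \<noteq> 0" using Phc_plus_i[OF d] d zi one_m_ie[of e] by simp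
  show r: "Phc e (cz p) / (Phc e (cz p) + \<i>) = lam e * (cz p / (cz p + \<i>))" using ratio1[OF d zi] .
  have "norm (cz (khk e p) / (cz (khk e p) + \<i>)) = rho h"
    unfolding c r norm_mult norm_lam using curve_norm[OF h1 q] p by simp
  then show "khk e p \<in> curve h" using curve_norm[OF h1 q] c ni by simp
qed

lemma sphere_curve:
  assumes "z \<in> sphere (\<i> * of_real h) (sqrt (h^2 + h))" and "h^2 + h \<ge> 0"
  shows "(Re z, Im z) \<in> curve h"
proof -
  have "(dist (\<i> * of_real h) z)^2 = h^2 + h" using assms by simp
  then have "(Re z)^2 + (Im z - h)^2 = h^2 + h" by (simp add: dist_norm cmod_power2 power2_commute)
  then show ?thesis by (simp add: curve_def power2_eq_square algebra_simps)
qed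

lemma circ_cz: "cz (r * cos (2*pi*t), h + r * sin (2*pi*t)) = circlepath (\<i> * of_real h) r t"
  by (simp add: circlepath_def part_circlepath_def linepath_def cz_def complex_eq_iff Re_exp Im_exp mult.commute)


definition psiP :: "real \<Rightarrow> real \<times> real \<Rightarrow> complex" where
  "psiP h p = (cz p / (cz p + \<i>)) / of_real (rho h)"
definition GP :: "real \<Rightarrow> complex \<Rightarrow> complex" where
  "GP h w = \<i> * of_real (rho h) * w / (1 - of_real (rho h) * w)"
definition gP :: "real \<Rightarrow> complex \<Rightarrow> real \<times> real" where
  "gP h w = (Re (GP h w), Im (GP h w))"

lemma rhoP: "h > 0 \<Longrightarrow> 0 < rho h \<and> rho h < 1"
  unfolding rho_def by (auto simp: real_sqrt_gt_zero)

lemma hP: fixes h :: real assumes "h > 0" shows "1 + h \<noteq> 0" "h/(1+h) > 0"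
proof -
  show "1 + h \<noteq> 0" using assms by linarith
  show "h/(1+h) > 0" using assms by simp
qed

lemma GP_den: fixes w :: complex assumes "h > 0" "norm w = 1" shows "1 - of_real (rho h) * w \<noteq> 0"
proof
  assume "1 - of_real (rho h) * w = 0"
  then have "of_real (rho h) * w = 1" by simp
  then have "norm (of_real (rho h) * w) = norm (1::complex)" by simp
  then have "\<bar>rho h\<bar> * 1 = 1" using assms(2) unfolding norm_mult norm_of_real by simp
  then show False using rhoP[OF assms(1)] by simp
qed

lemma GP_props:
  assumes "h > 0" "norm w = 1"
  shows "GP h w + \<i> = \<i> / (1 - of_real (rho h) * w)" "GP h w / (GP h w + \<i>) = of_real (rho h) * w"
  using GP_den[OF assms] by (simp_all add: GP_def field_simps)

lemma gP_in: assumes "h > 0" "norm w = 1" shows "gP h w \<in> curve h"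
proof -
  have ne: "GP h w + \<i> \<noteq> 0" using GP_props(1)[OF assms] GP_den[OF assms] by simp
  have "norm (GP h w / (GP h w + \<i>)) = rho h"
    using GP_props(2)[OF assms] rhoP[OF assms(1)] assms(2) by (simp add: norm_mult)
  then show ?thesis unfolding gP_def using curve_norm_c[OF hP[OF assms(1)] ne] by simp
qed

lemma psiP_gP: assumes "h > 0" "norm w = 1" shows "psiP h (gP h w) = w"
proof -
  have "cz (gP h w) = GP h w" unfolding gP_def by simp
  then show ?thesis unfolding psiP_def using GP_props(2)[OF assms] rhoP[OF assms(1)] by simp
qed

lemma gP_psiP: assumes h: "h > 0" and p: "p \<in> curve h" shows "gP h (psiP h p) = p"
proof -
  define z where "z = cz p"
  have zi: "z + \<i> \<noteq> 0" using curve_ne[OF p] h unfolding z_def by simp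
  have r: "rho h \<noteq> 0" using rhoP[OF h] by simp
  define u where "u = z / (z + \<i>)"
  have "GP h (psiP h p) = \<i> * u / (1 - u)" unfolding GP_def psiP_def u_def z_def using r by simp
  also have "1 - u = \<i> / (z + \<i>)" unfolding u_def using zi by (simp add: field_simps)
  also have "\<i> * u / (\<i> / (z + \<i>)) = z" unfolding u_def using zi by (simp add: field_simps)
  finally have "GP h (psiP h p) = cz p" unfolding z_def .
  then show ?thesis unfolding gP_def by simp
qed

lemma psiP_norm: assumes h: "h > 0" and p: "p \<in> curve h" shows "norm (psiP h p) = 1"
proof -
  have n: "norm (cz p / (cz p + \<i>)) = rho h" using curve_norm[OF hP[OF h]] p by blast
  have "norm (psiP h p) = norm (cz p / (cz p + \<i>)) / norm (complex_of_real (rho h))"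
    unfolding psiP_def by (rule norm_divide)
  also have "\<dots> = 1" unfolding n using rhoP[OF h] by simp
  finally show ?thesis .
qed

lemma cont_psiP: assumes h: "h > 0" shows "continuous_on (curve h) (psiP h)"
  unfolding psiP_def using curve_ne[of _ h] h rhoP[OF h]
  by (auto intro!: continuous_intros)

lemma cont_gP: assumes h: "h > 0" shows "continuous_on S1 (gP h)"
  unfolding gP_def GP_def using GP_den[OF h]
  by (auto intro!: continuous_intros)

lemma homeo_P: assumes h: "h > 0" shows "homeomorphic_map (top_of_set (curve h)) (top_of_set S1) (psiP h)"
  unfolding homeomorphic_map_maps homeomorphic_maps_def
  apply (rule exI[of _ "gP h"])
  using cont_psiP[OF h] cont_gP[OF h] psiP_norm[OF h] gP_in[OF h] psiP_gP[OF h] gP_psiP[OF h]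
  by auto

lemma conj_P: assumes h: "h > 0" and p: "p \<in> curve h"
  shows "khk e p \<in> curve h \<and> psiP h (khk e p) = cis (2*pi*rho_plus e) * psiP h p"
  using conj_common[OF hP[OF h] p, of e] unfolding cis_rho_plus psiP_def by simp

lemma wind_P: assumes h: "h > 0"
  shows "winding_number (\<lambda>t. psiP h (fst (0::real, h) + sqrt (h^2 + h) * cos (2*pi*t),
             snd (0::real, h) + sqrt (h^2 + h) * sin (2*pi*t))) 0 = 1"
proof -
  define r where "r = sqrt (h^2 + h)"
  define \<gamma> where "\<gamma> = circlepath (\<i> * of_real h) r"
  define f where "f = (\<lambda>z. (z / (z + \<i>)) / of_real (rho h))"
  have r0: "r \<ge> 0" unfolding r_def using h by simp
  have eq: "(\<lambda>t. psiP h (fst (0::real, h) + r * cos (2*pi*t), snd (0::real, h) + r * sin (2*pi*t))) = f \<circ> \<gamma>"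
    by (rule ext) (simp add: psiP_def f_def \<gamma>_def circ_cz)
  have oncurve: "(Re z, Im z) \<in> curve h" if "z \<in> path_image \<gamma>" for z
    using sphere_curve[of z h] that r0 h unfolding \<gamma>_def r_def by simp
  have zi: "z + \<i> \<noteq> 0" if "z \<in> path_image \<gamma>" for z
    using curve_ne[OF oncurve[OF that]] h by simp
  have z0: "z \<noteq> 0" if "z \<in> path_image \<gamma>" for z
    using curve_ne0[OF oncurve[OF that]] h by simp
  have rh: "rho h \<noteq> 0" using rhoP[OF h] by simp
  have pf: "path (f \<circ> \<gamma>)"
    by (rule path_continuous_image) (auto simp: \<gamma>_def f_def rh zi intro!: continuous_intros)
  have "winding_number (f \<circ> \<gamma>) 0 = winding_number \<gamma> 0"
  proof (rule winding_number_loops_linear_eq)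
    show "path \<gamma>" unfolding \<gamma>_def by simp
    show "path (f \<circ> \<gamma>)" by (rule pf)
    show "pathfinish \<gamma> = pathstart \<gamma>" unfolding \<gamma>_def by simp
    show "pathfinish (f \<circ> \<gamma>) = pathstart (f \<circ> \<gamma>)"
      by (simp add: pathfinish_compose pathstart_compose \<gamma>_def)
    fix t :: real assume t: "t \<in> {0..1}"
    define z where "z = \<gamma> t"
    have zp: "z \<in> path_image \<gamma>" unfolding z_def path_image_def using t by simp
    show "0 \<notin> closed_segment (\<gamma> t) ((f \<circ> \<gamma>) t)"
      unfolding o_def z_def[symmetric]
    proof (rule seg)
      show "f z \<noteq> 0" unfolding f_def using zi[OF zp] z0[OF zp] rh by simp
      fix k :: real assume k: "k \<ge> 0"
      show "z \<noteq> - of_real k * f z"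
      proof
        assume a: "z = - of_real k * f z"
        have X: "(z + \<i>) * of_real (rho h) \<noteq> 0" using zi[OF zp] rh by simp
        have "f z = z / ((z + \<i>) * of_real (rho h))" unfolding f_def by simp
        then have fz: "f z * ((z + \<i>) * of_real (rho h)) = z" using X by simp
        have "z * ((z + \<i>) * of_real (rho h)) = (- of_real k * f z) * ((z + \<i>) * of_real (rho h))"
          by (metis a)
        also have "\<dots> = z * (- of_real k)" using fz by (simp add: mult.assoc)
        finally have "z * ((z + \<i>) * of_real (rho h)) = z * (- of_real k)" .
        then have b: "(z + \<i>) * of_real (rho h) = - of_real k" using z0[OF zp] mult_left_cancel by blast
        have "(Im z + 1) * rho h = 0" using arg_cong[OF b, of Im] by simp
        then have "Im z = -1" using rh by simp
        then have "(Re z)^2 + 1 + h = 0" using oncurve[OF zp] by (simp add: curve_def)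
        moreover have "(Re z)^2 \<ge> 0" by simp
        ultimately show False using h by linarith
      qed
    qed
  qed
  also have "\<dots> = 1" unfolding \<gamma>_def
  proof (rule winding_number_circlepath)
    have "\<bar>h\<bar> < r" unfolding r_def using h by (intro real_less_rsqrt) (simp add: power2_eq_square)
    then show "norm (0 - \<i> * complex_of_real h) < r" by (simp add: norm_mult)
  qed
  finally show ?thesis using eq unfolding r_def by simp
qed

lemma part_P: assumes h: "h > 0"
  shows "conj_rot_circle (curve h) (khk e) (rho_plus e) (0, h) (sqrt (h^2 + h))"
  unfolding conj_rot_circle_def
  using homeo_P[OF h] wind_P[OF h] conj_P[OF h] by blast


definition psiM :: "real \<Rightarrow> real \<times> real \<Rightarrow> complex" where
  "psiM h p = ((cz p + \<i>) / cz p) * of_real (rho h)"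
definition GM :: "real \<Rightarrow> complex \<Rightarrow> complex" where
  "GM h w = \<i> * of_real (rho h) / (w - of_real (rho h))"
definition gM :: "real \<Rightarrow> complex \<Rightarrow> real \<times> real" where
  "gM h w = (Re (GM h w), Im (GM h w))"

lemma hM: fixes h :: real assumes "h < -1" shows "1 + h \<noteq> 0" "h/(1+h) > 0" "h \<noteq> 0"
proof -
  show "1 + h \<noteq> 0" using assms by linarith
  show "h/(1+h) > 0" using assms by (simp add: zero_less_divide_iff)
  show "h \<noteq> 0" using assms by linarith
qed

lemma rhoM: assumes "h < -1" shows "1 < rho h"
proof -
  have "1 < h/(1+h)" using assms by (simp add: less_divide_eq)
  then show ?thesis unfolding rho_def by simp
qed

lemma GM_den: fixes w :: complex assumes "h < -1" "norm w = 1" shows "w - of_real (rho h) \<noteq> 0"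
proof
  assume "w - of_real (rho h) = 0"
  then have "norm w = norm (complex_of_real (rho h))" by simp
  then show False using rhoM[OF assms(1)] assms(2) by simp
qed

lemma GM_props:
  fixes w :: complex assumes "h < -1" "norm w = 1"
  shows "GM h w + \<i> = \<i> * w / (w - of_real (rho h))" "GM h w \<noteq> 0"
    "GM h w / (GM h w + \<i>) = of_real (rho h) / w" "(GM h w + \<i>) / GM h w = w / of_real (rho h)"
proof -
  have d: "w - of_real (rho h) \<noteq> 0" using GM_den[OF assms] .
  have r: "rho h \<noteq> 0" using rhoM[OF assms(1)] by simp
  have w: "w \<noteq> 0" using assms(2) by auto
  show 1: "GM h w + \<i> = \<i> * w / (w - of_real (rho h))" using d by (simp add: GM_def field_simps)
  show 2: "GM h w \<noteq> 0" using d r by (simp add: GM_def)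
  show "GM h w / (GM h w + \<i>) = of_real (rho h) / w" unfolding 1 using d r w by (simp add: GM_def field_simps)
  show "(GM h w + \<i>) / GM h w = w / of_real (rho h)" unfolding 1 using d r w by (simp add: GM_def field_simps)
qed

lemma gM_in: fixes w :: complex assumes "h < -1" "norm w = 1" shows "gM h w \<in> curve h"
proof -
  have w: "w \<noteq> 0" using assms(2) by auto
  have ne: "GM h w + \<i> \<noteq> 0" using GM_props(1)[OF assms] GM_den[OF assms] w by simp
  have "norm (GM h w / (GM h w + \<i>)) = rho h"
    using GM_props(3)[OF assms] rhoM[OF assms(1)] assms(2) by (simp add: norm_divide)
  then show ?thesis unfolding gM_def using curve_norm_c[OF hM(1,2)[OF assms(1)] ne] by simp
qed

lemma psiM_gM: fixes w :: complex assumes "h < -1" "norm w = 1" shows "psiM h (gM h w) = w"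
proof -
  have "cz (gM h w) = GM h w" unfolding gM_def by simp
  then show ?thesis unfolding psiM_def using GM_props(4)[OF assms] rhoM[OF assms(1)] by simp
qed

lemma gM_psiM: assumes h: "h < -1" and p: "p \<in> curve h" shows "gM h (psiM h p) = p"
proof -
  define z where "z = cz p"
  have z0: "z \<noteq> 0" using curve_ne0[OF p] hM[OF h] unfolding z_def by simp
  have r: "rho h \<noteq> 0" using rhoM[OF h] by simp
  have "psiM h p - of_real (rho h) = of_real (rho h) * \<i> / z"
    unfolding psiM_def z_def[symmetric] using z0 by (simp add: field_simps)
  then have "GM h (psiM h p) = z" unfolding GM_def using z0 r by simp
  then show ?thesis unfolding gM_def z_def by simp
qed

lemma psiM_norm: assumes h: "h < -1" and p: "p \<in> curve h" shows "norm (psiM h p) = 1"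
proof -
  have n: "norm (cz p / (cz p + \<i>)) = rho h" using curve_norm[OF hM(1,2)[OF h]] p by blast
  have "(cz p + \<i>) / cz p = inverse (cz p / (cz p + \<i>))" by simp
  then have "norm ((cz p + \<i>) / cz p) = norm (inverse (cz p / (cz p + \<i>)))" by simp
  also have "\<dots> = inverse (rho h)" unfolding norm_inverse n ..
  finally have "norm ((cz p + \<i>) / cz p) = inverse (rho h)" .
  then have "norm (psiM h p) = inverse (rho h) * rho h"
    unfolding psiM_def norm_mult using rhoM[OF h] by simp
  then show ?thesis using rhoM[OF h] by simp
qed

lemma cont_psiM: assumes h: "h < -1" shows "continuous_on (curve h) (psiM h)"
  unfolding psiM_def using curve_ne0[of _ h] hM[OF h]
  by (auto intro!: continuous_intros)

lemma cont_gM: assumes h: "h < -1" shows "continuous_on S1 (gM h)"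
  unfolding gM_def GM_def using GM_den[OF h]
  by (auto intro!: continuous_intros)

lemma homeo_M: assumes h: "h < -1" shows "homeomorphic_map (top_of_set (curve h)) (top_of_set S1) (psiM h)"
  unfolding homeomorphic_map_maps homeomorphic_maps_def
  apply (rule exI[of _ "gM h"])
  using cont_psiM[OF h] cont_gM[OF h] psiM_norm[OF h] gM_in[OF h] psiM_gM[OF h] gM_psiM[OF h]
  by auto

lemma conj_M: assumes h: "h < -1" and p: "p \<in> curve h"
  shows "khk e p \<in> curve h \<and> psiM h (khk e p) = cis (2*pi*rho_minus e) * psiM h p"
proof -
  have d: "dn e (cz p) \<noteq> 0" using curve_dn[OF p] .
  have z0: "cz p \<noteq> 0" using curve_ne0[OF p] hM[OF h] by simp
  note cc = conj_common[OF hM(1,2)[OF h] p, of e]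
  have "psiM h (khk e p) = (((cz p + \<i>) / cz p) / lam e) * of_real (rho h)"
    unfolding psiM_def cc(2) ratio2[OF d z0] ..
  also have "\<dots> = (1 / lam e) * psiM h p" unfolding psiM_def by simp
  finally show ?thesis using cc(1) unfolding cis_rho_minus by simp
qed

lemma wind_M: assumes h: "h < -1"
  shows "winding_number (\<lambda>t. psiM h (fst (0::real, h) + sqrt (h^2 + h) * cos (2*pi*t),
             snd (0::real, h) + sqrt (h^2 + h) * sin (2*pi*t))) 0 = 1"
proof -
  define r where "r = sqrt (h^2 + h)"
  define \<gamma> where "\<gamma> = circlepath (\<i> * of_real h) r"
  define f where "f = (\<lambda>z. ((z + \<i>) / z) * of_real (rho h))"
  define g where "g = (\<lambda>z. z + \<i>) \<circ> \<gamma>"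
  have hh0: "h * (h + 1) > 0" using h by (intro mult_neg_neg) auto
  have hh: "h^2 + h \<ge> 0" using hh0 by (simp add: power2_eq_square algebra_simps)
  have r0: "r \<ge> 0" unfolding r_def using hh by simp
  have eq: "(\<lambda>t. psiM h (fst (0::real, h) + r * cos (2*pi*t), snd (0::real, h) + r * sin (2*pi*t))) = f \<circ> \<gamma>"
    by (rule ext) (simp add: psiM_def f_def \<gamma>_def circ_cz)
  have oncurve: "(Re z, Im z) \<in> curve h" if "z \<in> path_image \<gamma>" for z
    using sphere_curve[of z h] that r0 hh unfolding \<gamma>_def r_def by simp
  have zi: "z + \<i> \<noteq> 0" if "z \<in> path_image \<gamma>" for z
    using curve_ne[OF oncurve[OF that]] hM[OF h] by simp
  have z0: "z \<noteq> 0" if "z \<in> path_image \<gamma>" for z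
    using curve_ne0[OF oncurve[OF that]] hM[OF h] by simp
  have rh: "rho h \<noteq> 0" using rhoM[OF h] by simp
  have pf: "path (f \<circ> \<gamma>)"
    by (rule path_continuous_image) (use z0 rh in \<open>auto simp: \<gamma>_def[symmetric] f_def intro!: continuous_intros\<close>, simp add: \<gamma>_def)
  have pg: "path g" unfolding g_def
    by (rule path_continuous_image) (auto simp: \<gamma>_def intro!: continuous_intros)
  have "winding_number (f \<circ> \<gamma>) 0 = winding_number g 0"
  proof (rule winding_number_loops_linear_eq)
    show "path g" by (rule pg)
    show "path (f \<circ> \<gamma>)" by (rule pf)
    show "pathfinish g = pathstart g" unfolding g_def
      by (simp add: pathfinish_compose pathstart_compose \<gamma>_def)
    show "pathfinish (f \<circ> \<gamma>) = pathstart (f \<circ> \<gamma>)"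
      by (simp add: pathfinish_compose pathstart_compose \<gamma>_def)
    fix t :: real assume t: "t \<in> {0..1}"
    define z where "z = \<gamma> t"
    have zp: "z \<in> path_image \<gamma>" unfolding z_def path_image_def using t by simp
    show "0 \<notin> closed_segment (g t) ((f \<circ> \<gamma>) t)"
      unfolding o_def g_def z_def[symmetric]
    proof (rule seg)
      show "f z \<noteq> 0" unfolding f_def using zi[OF zp] z0[OF zp] rh by simp
      fix k :: real assume k: "k \<ge> 0"
      show "z + \<i> \<noteq> - of_real k * f z"
      proof
        assume a: "z + \<i> = - of_real k * f z"
        have fz: "f z * z = (z + \<i>) * of_real (rho h)" unfolding f_def using z0[OF zp] by simp
        have "(z + \<i>) * z = (- of_real k * f z) * z" by (metis a)
        also have "\<dots> = - of_real k * (f z * z)" by (simp add: mult.assoc)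
        also have "\<dots> = - of_real k * ((z + \<i>) * of_real (rho h))" by (simp only: fz)
        also have "\<dots> = (z + \<i>) * (- of_real k * of_real (rho h))" by (simp add: algebra_simps)
        finally have "(z + \<i>) * z = (z + \<i>) * (- of_real k * of_real (rho h))" .
        then have b: "z = - of_real k * of_real (rho h)" using zi[OF zp] mult_left_cancel by blast
        have "Im z = 0" using arg_cong[OF b, of Im] by simp
        then have "(Re z)^2 - h = 0" using oncurve[OF zp] by (simp add: curve_def)
        moreover have "(Re z)^2 \<ge> 0" by simp
        ultimately show False using h by linarith
      qed
    qed
  qed
  also have "winding_number g 0 = winding_number \<gamma> (- \<i>)"
    unfolding winding_number_offset[of \<gamma> "- \<i>"] g_def by (simp add: o_def)
  also have "\<dots> = 1" unfolding \<gamma>_def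
  proof (rule winding_number_circlepath)
    have "\<bar>1 + h\<bar> < r" unfolding r_def using h by (intro real_less_rsqrt) (simp add: power2_eq_square algebra_simps)
    moreover have "norm (- \<i> - \<i> * complex_of_real h) = \<bar>1 + h\<bar>"
    proof -
      have e: "- \<i> - \<i> * complex_of_real h = \<i> * of_real (- (1 + h))" by (simp add: algebra_simps)
      show ?thesis unfolding e norm_mult norm_of_real by simp
    qed
    ultimately show "norm (- \<i> - \<i> * complex_of_real h) < r" by simp
  qed
  finally show ?thesis using eq unfolding r_def by simp
qed

lemma part_M: assumes h: "h < -1"
  shows "conj_rot_circle (curve h) (khk e) (rho_minus e) (0, h) (sqrt (h^2 + h))"
  unfolding conj_rot_circle_def
  using homeo_M[OF h] wind_M[OF h] conj_M[OF h] by blast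


lemma istop: "istopology extline_open"
  unfolding istopology_def
proof (intro conjI allI impI)
  fix S T assume S: "extline_open S" and T: "extline_open T"
  show "extline_open (S \<inter> T)" unfolding extline_open_def
  proof (intro conjI impI)
    show "open (Some -` (S \<inter> T))" using S T unfolding extline_open_def by (simp add: vimage_Int open_Int)
    assume "None \<in> S \<inter> T"
    then have "bounded (Some -` (UNIV - S))" "bounded (Some -` (UNIV - T))"
      using S T unfolding extline_open_def by auto
    then have "bounded (Some -` (UNIV - S) \<union> Some -` (UNIV - T))" by simp
    moreover have "Some -` (UNIV - (S \<inter> T)) = Some -` (UNIV - S) \<union> Some -` (UNIV - T)" by auto
    ultimately show "bounded (Some -` (UNIV - (S \<inter> T)))" by simp
  qed
next
  fix K :: "real option set set" assume K: "\<forall>U\<in>K. extline_open U"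
  show "extline_open (\<Union>K)" unfolding extline_open_def
  proof (intro conjI impI)
    have "Some -` (\<Union>K) = (\<Union>U\<in>K. Some -` U)" by auto
    then show "open (Some -` (\<Union>K))" using K unfolding extline_open_def by auto
    assume "None \<in> \<Union>K"
    then obtain U where U: "U \<in> K" "None \<in> U" by auto
    then have "bounded (Some -` (UNIV - U))" using K unfolding extline_open_def by auto
    moreover have "Some -` (UNIV - \<Union>K) \<subseteq> Some -` (UNIV - U)" using U by auto
    ultimately show "bounded (Some -` (UNIV - \<Union>K))" by (rule bounded_subset)
  qed
qed

lemma openin_extline: "openin extline = extline_open"
  unfolding extline_def using istop by simp

lemma topspace_extline[simp]: "topspace extline = UNIV"
proof -
  have "extline_open UNIV" unfolding extline_open_def by simp
  then have "openin extline UNIV" unfolding openin_extline .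
  then show ?thesis using openin_subset by blast
qed

definition pr :: "real \<Rightarrow> complex" where
  "pr x = (2 * of_real x - \<i>) / (2 * of_real x + \<i>)"

definition psiE :: "real option \<Rightarrow> complex" where
  "psiE q = (case q of None \<Rightarrow> 1 | Some x \<Rightarrow> pr x)"

definition gr :: "complex \<Rightarrow> real" where
  "gr w = Re (\<i> * (1 + w) / (2 * (1 - w)))"

definition gE :: "complex \<Rightarrow> real option" where
  "gE w = (if w = 1 then None else Some (gr w))"

lemma pr_den: "2 * complex_of_real x + \<i> \<noteq> 0"
  by (simp add: complex_eq_iff)

lemma pr_norm: "norm (pr x) = 1"
proof -
  have "cmod (2 * complex_of_real x - \<i>) = cmod (2 * complex_of_real x + \<i>)" by (simp add: cmod_def)
  then show ?thesis unfolding pr_def norm_divide using pr_den[of x] by simp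
qed

lemma pr_ne1: "pr x \<noteq> 1"
proof
  assume "pr x = 1"
  then have "2 * complex_of_real x - \<i> = 2 * complex_of_real x + \<i>"
    unfolding pr_def using pr_den[of x] by (simp add: divide_eq_eq)
  then show False by (simp add: complex_eq_iff)
qed

lemma gr_pr: "gr (pr x) = x"
proof -
  have d: "2 * complex_of_real x + \<i> \<noteq> 0" by (rule pr_den)
  have "\<i> * (1 + pr x) / (2 * (1 - pr x)) = of_real x"
    unfolding pr_def using d by (simp add: field_simps)
  then show ?thesis unfolding gr_def by simp
qed

lemma pr_gr: assumes n: "norm w = 1" and w1: "w \<noteq> 1" shows "pr (gr w) = w"
proof -
  define c where "c = \<i> * (1 + w) / (2 * (1 - w))"
  have d: "1 - w \<noteq> 0" using w1 by simp
  have sq: "(Re w)^2 + (Im w)^2 = 1" using n by (simp add: cmod_def)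
  have "Im c = 0"
  proof -
    have "Im c = (2 * (1 - (Re w)^2 - (Im w)^2)) / ((2 * (1 - Re w))^2 + (2 * Im w)^2)"
      unfolding c_def by (simp add: Im_divide power2_eq_square algebra_simps)
    then show ?thesis using sq by simp
  qed
  then have cr: "complex_of_real (gr w) = c" unfolding gr_def c_def[symmetric] by (simp add: complex_eq_iff)
  have "pr (gr w) = (2 * c - \<i>) / (2 * c + \<i>)" unfolding pr_def cr ..
  also have "2 * c - \<i> = 2 * \<i> * w / (1 - w)" unfolding c_def using d by (simp add: field_simps)
  also have "2 * c + \<i> = 2 * \<i> / (1 - w)" unfolding c_def using d by (simp add: field_simps)
  also have "(2 * \<i> * w / (1 - w)) / (2 * \<i> / (1 - w)) = w" using d by simp
  finally show ?thesis .
qed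

lemma cont_pr: "continuous_on S pr"
  unfolding pr_def using pr_den by (auto intro!: continuous_intros)

lemma cont_gr: "continuous_on (UNIV - {1}) gr"
  unfolding gr_def by (auto intro!: continuous_intros)


lemma psiE_norm: "norm (psiE q) = 1"
  by (cases q) (simp_all add: psiE_def pr_norm)

lemma cont_psiE: "continuous_map extline (top_of_set S1) psiE"
  unfolding continuous_map_def
proof (intro conjI allI impI)
  show "psiE \<in> topspace extline \<rightarrow> topspace (top_of_set S1)" using psiE_norm by simp
  fix U assume "openin (top_of_set S1) U"
  then obtain T where T: "open T" "U = S1 \<inter> T" by (auto simp: openin_open)
  have eqs: "{q \<in> topspace extline. psiE q \<in> U} = {q. psiE q \<in> T}" using psiE_norm T by auto
  show "openin extline {q \<in> topspace extline. psiE q \<in> U}" unfolding eqs openin_extline extline_open_def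
  proof (intro conjI impI)
    have "Some -` {q. psiE q \<in> T} = pr -` T" by (auto simp: psiE_def)
    then show "open (Some -` {q. psiE q \<in> T})" using open_vimage[OF T(1) cont_pr] by simp
    assume "None \<in> {q. psiE q \<in> T}"
    then have "1 \<in> T" by (simp add: psiE_def)
    then obtain d where d: "d > 0" "ball 1 d \<subseteq> T" using T(1) open_contains_ball by blast
    have "Some -` (UNIV - {q. psiE q \<in> T}) \<subseteq> cball 0 (1/d)"
    proof
      fix x assume "x \<in> Some -` (UNIV - {q. psiE q \<in> T})"
      then have xT: "pr x \<notin> T" by (simp add: psiE_def)
      show "x \<in> cball 0 (1/d)"
      proof (rule ccontr)
        assume "x \<notin> cball 0 (1/d)"
        then have xb: "\<bar>x\<bar> > 1/d" by simp
        have xp: "\<bar>x\<bar> > 0" using xb d(1) by (smt (verit) divide_pos_pos)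
        have e1: "1 - pr x = 2 * \<i> / (2 * complex_of_real x + \<i>)"
          unfolding pr_def using pr_den[of x] by (simp add: field_simps)
        have nb: "norm (2 * complex_of_real x + \<i>) \<ge> 2 * \<bar>x\<bar>"
          using abs_Re_le_cmod[of "2 * complex_of_real x + \<i>"] by simp
        have "dist 1 (pr x) = 2 / norm (2 * complex_of_real x + \<i>)"
          unfolding dist_norm e1 norm_divide by simp
        also have "\<dots> \<le> 2 / (2 * \<bar>x\<bar>)" using nb xp pr_den[of x] by (intro divide_left_mono) auto
        also have "\<dots> = 1 / \<bar>x\<bar>" by simp
        also have "\<dots> < d" using xb xp d(1) by (simp add: field_simps)
        finally have "pr x \<in> ball 1 d" by simp
        then show False using d(2) xT by blast
      qed
    qed
    then show "bounded (Some -` (UNIV - {q. psiE q \<in> T}))" using bounded_cball bounded_subset by blast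
  qed
qed

lemma cont_gE: "continuous_map (top_of_set S1) extline gE"
  unfolding continuous_map_def
proof (intro conjI allI impI)
  show "gE \<in> topspace (top_of_set S1) \<rightarrow> topspace extline" by simp
  fix U assume "openin extline U"
  then have U: "extline_open U" by (simp add: openin_extline)
  define Oo where "Oo = Some -` U"
  have Oo: "open Oo" using U by (simp add: Oo_def extline_open_def)
  show "openin (top_of_set S1) {w \<in> topspace (top_of_set S1). gE w \<in> U}"
  proof (cases "None \<in> U")
    case False
    have "{w \<in> topspace (top_of_set S1). gE w \<in> U} = S1 \<inter> (gr -` Oo \<inter> (UNIV - {1}))"
      using False by (auto simp: gE_def Oo_def split: if_splits)
    moreover have "open (gr -` Oo \<inter> (UNIV - {1}))"
    proof -
      have "open (UNIV - {1::complex})" by (simp add: open_Diff)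
      then show ?thesis using continuous_on_open_vimage[of "UNIV - {1}" gr] cont_gr Oo by auto
    qed
    ultimately show ?thesis unfolding openin_open by blast
  next
    case True
    define K where "K = - Oo"
    have "Some -` (UNIV - U) = K" unfolding K_def Oo_def by auto
    then have "bounded K" using U True unfolding extline_open_def by simp
    moreover have "closed K" using Oo unfolding K_def by (rule closed_Compl)
    ultimately have "compact K" by (simp add: compact_eq_bounded_closed)
    then have "compact (pr ` K)" by (rule compact_continuous_image[OF cont_pr])
    then have cl: "closed (pr ` K)" by (rule compact_imp_closed)
    have "{w \<in> topspace (top_of_set S1). gE w \<in> U} = S1 \<inter> (- (pr ` K))"
    proof (intro set_eqI iffI)
      fix w assume "w \<in> {w \<in> topspace (top_of_set S1). gE w \<in> U}"
      then have w: "norm w = 1" "gE w \<in> U" by auto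
      show "w \<in> S1 \<inter> (- (pr ` K))"
      proof (cases "w = 1")
        case True then show ?thesis using pr_ne1 by auto
      next
        case False
        then have "gr w \<in> Oo" using w unfolding gE_def Oo_def by simp
        then have "w \<notin> pr ` K" unfolding K_def using gr_pr by auto
        then show ?thesis using w by simp
      qed
    next
      fix w assume "w \<in> S1 \<inter> (- (pr ` K))"
      then have w: "norm w = 1" "w \<notin> pr ` K" by auto
      show "w \<in> {w \<in> topspace (top_of_set S1). gE w \<in> U}"
      proof (cases "w = 1")
        case True then show ?thesis using \<open>None \<in> U\<close> by (simp add: gE_def)
      next
        case False
        have "gr w \<notin> K" using w pr_gr[OF w(1) False] by (metis image_eqI)
        then have "gr w \<in> Oo" unfolding K_def by simp
        then show ?thesis using w False unfolding gE_def Oo_def by simp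
      qed
    qed
    moreover have "open (- (pr ` K))" using cl by (simp add: open_Compl)
    ultimately show ?thesis unfolding openin_open by blast
  qed
qed

lemma homeo_E: "homeomorphic_map extline (top_of_set S1) psiE"
  unfolding homeomorphic_map_maps homeomorphic_maps_def
proof (intro exI[of _ gE] conjI ballI)
  show "continuous_map extline (top_of_set S1) psiE" by (rule cont_psiE)
  show "continuous_map (top_of_set S1) extline gE" by (rule cont_gE)
  fix q assume "q \<in> topspace extline"
  show "gE (psiE q) = q"
    by (cases q) (simp_all add: psiE_def gE_def pr_ne1 gr_pr)
next
  fix w assume "w \<in> topspace (top_of_set S1)"
  then have w: "norm w = 1" by simp
  show "psiE (gE w) = w"
    by (cases "w = 1") (simp_all add: psiE_def gE_def pr_gr[OF w])
qed


lemma den_line: "khk_den e x (-1/2) = (2*e*x - 1)^2"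
  by (simp add: khk_den_def power2_eq_square algebra_simps)

lemma snd_line: "khk_den e x (-1/2) \<noteq> 0 \<Longrightarrow> snd (khk e (x, -1/2)) = -1/2"
proof -
  assume d: "khk_den e x (-1/2) \<noteq> 0"
  have "-2*e^2*x^2 + 2*e*x - 2*e^2*(-1/2)^2 + (1 - e^2)*(-1/2) = -(1/2) * khk_den e x (-1/2)"
    by (simp add: khk_den_def power2_eq_square field_simps)
  then show ?thesis using d by (simp add: khk_def Let_def)
qed

lemma div_cc: "(c::complex) \<noteq> 0 \<Longrightarrow> (a / c) / (b / c) = a / b"
  by (cases "b = 0") (simp_all add: field_simps)

lemma pr_cz: "pr x = cz (x, -1/2) / (cz (x, -1/2) + \<i>)"
proof -
  have a: "cz (x, -1/2) = (2 * complex_of_real x - \<i>) / 2" by (simp add: cz_def complex_eq_iff)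
  have b: "cz (x, -1/2) + \<i> = (2 * complex_of_real x + \<i>) / 2" by (simp add: cz_def complex_eq_iff)
  show ?thesis unfolding b unfolding a pr_def by (rule div_cc[symmetric]) simp
qed

lemma conj_E: "psiE (khk_inf e q) = cis (2*pi*rho_plus e) * psiE q"
  unfolding cis_rho_plus
proof (cases q)
  case None
  show "psiE (khk_inf e q) = lam e * psiE q"
  proof (cases "e = 0")
    case True then show ?thesis using None by (simp add: khk_inf_def psiE_def lam_def)
  next
    case False
    have d: "- 1 / complex_of_real e + \<i> \<noteq> 0" by (simp add: complex_eq_iff)
    have "pr (-1/(2*e)) = (- 1 / complex_of_real e - \<i>) / (- 1 / complex_of_real e + \<i>)"
      unfolding pr_def by simp
    also have "\<dots> = lam e" unfolding lam_def using False d one_m_ie[of e] by (simp add: field_simps)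
    finally show ?thesis using None False by (simp add: khk_inf_def psiE_def)
  qed
next
  case (Some x)
  show "psiE (khk_inf e q) = lam e * psiE q"
  proof (cases "khk_den e x (-1/2) = 0")
    case True
    then have ex: "2*e*x = 1" unfolding den_line by simp
    then have e0: "e \<noteq> 0" by auto
    have "complex_of_real (2 * x) = 1 / complex_of_real e"
      using ex e0 by (simp add: field_simps flip: of_real_mult)
    then have "pr x = (1 / complex_of_real e - \<i>) / (1 / complex_of_real e + \<i>)"
      unfolding pr_def by simp
    also have "1 / complex_of_real e - \<i> = (1 - \<i> * e) / e" using e0 by (simp add: field_simps)
    also have "1 / complex_of_real e + \<i> = (1 + \<i> * e) / e" using e0 by (simp add: field_simps)
    also have "((1 - \<i> * e) / e) / ((1 + \<i> * e) / e) = (1 - \<i> * e) / (1 + \<i> * e)" using e0 by (simp add: div_cc)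
    finally have "lam e * pr x = 1" unfolding lam_def using one_m_ie[of e] one_p_ie[of e] by simp
    then show ?thesis using Some True by (simp add: khk_inf_def psiE_def)
  next
    case False
    define z where "z = cz (x, -1/2)"
    have dz: "dn e z \<noteq> 0" using False den_eq[of e z] unfolding z_def by auto
    have zi: "z + \<i> \<noteq> 0" unfolding z_def by (simp add: complex_eq_iff)
    define \<Phi> where "\<Phi> = Phc e z"
    have k: "khk e (x, -1/2) = (Re \<Phi>, Im \<Phi>)" unfolding \<Phi>_def z_def khk_eq ..
    have im: "Im \<Phi> = -1/2" using snd_line[OF False] k by simp
    have "cz (Re \<Phi>, -1/2) = \<Phi>" using im by (simp add: cz_def complex_eq_iff)
    then have A: "pr (Re \<Phi>) = \<Phi> / (\<Phi> + \<i>)" unfolding pr_cz by simp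
    have prx: "pr x = z / (z + \<i>)" unfolding z_def by (rule pr_cz)
    have B: "\<Phi> / (\<Phi> + \<i>) = lam e * pr x" unfolding \<Phi>_def ratio1[OF dz zi] prx ..
    have "pr (Re \<Phi>) = lam e * pr x" using A B by simp
    then show ?thesis using Some False k by (simp add: khk_inf_def psiE_def)
  qed
qed

lemma pr_tan: assumes c: "c > 0"
  shows "pr (s/c) = - (complex_of_real c + \<i> * complex_of_real (2 * s)) / (complex_of_real c - \<i> * complex_of_real (2 * s))"
proof -
  have d1: "complex_of_real c - \<i> * complex_of_real (2 * s) \<noteq> 0" using c by (simp add: complex_eq_iff)
  have d2: "2 * complex_of_real s + \<i> * complex_of_real c \<noteq> 0" using c by (simp add: complex_eq_iff)
  have c0: "complex_of_real c \<noteq> 0" using c by simp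
  have "pr (s/c) = (2 * complex_of_real s - \<i> * complex_of_real c) / (2 * complex_of_real s + \<i> * complex_of_real c)"
  proof -
    have n1: "2 * complex_of_real (s/c) - \<i> = (2 * complex_of_real s - \<i> * complex_of_real c) / complex_of_real c"
      using c0 by (simp add: field_simps)
    have n2: "2 * complex_of_real (s/c) + \<i> = (2 * complex_of_real s + \<i> * complex_of_real c) / complex_of_real c"
      using c0 by (simp add: field_simps)
    show ?thesis unfolding pr_def n1 n2 by (rule div_cc[OF c0])
  qed
  also have "\<dots> = - (complex_of_real c + \<i> * complex_of_real (2 * s)) / (complex_of_real c - \<i> * complex_of_real (2 * s))"
    unfolding frac_eq_eq[OF d2 d1] by (simp add: complex_eq_iff algebra_simps)
  finally show ?thesis .
qed

lemma Dn_ne: "c^2 + s^2 = 1 \<Longrightarrow> complex_of_real c - \<i> * complex_of_real (2 * s) \<noteq> 0"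
  by (auto simp: complex_eq_iff)
lemma Nm_ne: "c^2 + s^2 = 1 \<Longrightarrow> complex_of_real c + \<i> * complex_of_real (2 * s) \<noteq> 0"
  by (auto simp: complex_eq_iff)

lemma real_contra:
  fixes c s k :: real
  assumes "c^2 + s^2 = 1" "k \<ge> 0" "-(c^3 + 3 * c * s^2) = k*c" "-2 * s^3 = 2 * k * s"
  shows False
proof -
  have "s * (s^2 + k) = 0" using assms(4) by (simp add: power2_eq_square power3_eq_cube algebra_simps)
  moreover have "s \<noteq> 0 \<Longrightarrow> s^2 + k > 0" using assms(2) by (simp add: add_pos_nonneg)
  ultimately have s0: "s = 0" by fastforce
  then have c2: "c^2 = 1" using assms(1) by simp
  then have "c \<noteq> 0" by auto
  have "c * (c^2 + k) = 0" using assms(3) s0 by (simp add: power2_eq_square power3_eq_cube algebra_simps)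
  then have "c^2 + k = 0" using \<open>c \<noteq> 0\<close> by simp
  then show False using c2 assms(2) by simp
qed


lemma circ01: "circlepath 0 1 t = - ((complex_of_real (cos (pi*(t-1/2))) + \<i> * complex_of_real (sin (pi*(t-1/2))))^2)"
proof -
  define th where "th = pi*(t-1/2)"
  have a: "2*pi*t = 2*th + pi" unfolding th_def by (simp add: algebra_simps)
  have c: "cos (2*pi*t) = - ((cos th)^2 - (sin th)^2)" unfolding a by (simp add: cos_add cos_double)
  have s: "sin (2*pi*t) = - (2 * sin th * cos th)" unfolding a by (simp add: sin_add sin_double)
  have "circlepath 0 1 t = exp (\<i> * complex_of_real (2*pi*t))"
    by (simp add: circlepath_def part_circlepath_def linepath_def mult.commute)
  also have "\<dots> = - ((complex_of_real (cos th) + \<i> * complex_of_real (sin th))^2)"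
  proof -
    have R: "Re (exp (\<i> * complex_of_real (2*pi*t))) = cos (2*pi*t)" by (simp add: Re_exp)
    have I: "Im (exp (\<i> * complex_of_real (2*pi*t))) = sin (2*pi*t)" by (simp add: Im_exp)
    show ?thesis
      apply (simp only: complex_eq_iff R I c s)
      by (simp add: power2_eq_square algebra_simps)
  qed
  finally show ?thesis unfolding th_def .
qed

lemma seg_contra:
  fixes c s k :: real
  assumes cs: "c^2 + s^2 = 1" and k: "k \<ge> 0"
    and E: "- ((complex_of_real c + \<i> * complex_of_real s)^2) * (complex_of_real c - \<i> * complex_of_real (2 * s))
            = complex_of_real k * (complex_of_real c + \<i> * complex_of_real (2 * s))"
  shows False
proof -
  have r1: "-(c^3 + 3 * c * s^2) = k*c" using arg_cong[OF E, of Re]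
    by (simp add: power2_eq_square power3_eq_cube algebra_simps)
  have r2: "-2 * s^3 = 2 * k * s" using arg_cong[OF E, of Im]
    by (simp add: power2_eq_square power3_eq_cube algebra_simps)
  show False using real_contra[OF cs k r1 r2] .
qed


definition PP :: "real \<Rightarrow> complex" where
  "PP t = - (complex_of_real (cos (pi*(t-1/2))) + \<i> * complex_of_real (2 * sin (pi*(t-1/2))))
           / (complex_of_real (cos (pi*(t-1/2))) - \<i> * complex_of_real (2 * sin (pi*(t-1/2))))"

lemma PP_0: "PP 0 = 1"
proof -
  have a: "pi*(0-1/2) = - (pi/2)" by simp
  show ?thesis unfolding PP_def a by (simp add: complex_eq_iff)
qed

lemma PP_1: "PP 1 = 1"
proof -
  have a: "pi*(1-1/2) = pi/2" by simp
  show ?thesis unfolding PP_def a by (simp add: complex_eq_iff)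
qed

lemma loop_PP: assumes t: "0 \<le> t" "t \<le> 1" shows "(psiE \<circ> extline_loop) t = PP t"
proof (cases "0 < t \<and> t < 1")
  case True
  define th where "th = pi*(t-1/2)"
  have th1: "- (pi/2) < th" "th < pi/2" unfolding th_def using True by (simp_all add: algebra_simps)
  have c: "cos th > 0" by (rule cos_gt_zero_pi[OF th1])
  have "(psiE \<circ> extline_loop) t = pr (sin th / cos th)"
    using True by (simp add: extline_loop_def psiE_def th_def tan_def)
  also have "\<dots> = PP t" unfolding pr_tan[OF c] unfolding PP_def th_def ..
  finally show ?thesis .
next
  case False
  then have "t = 0 \<or> t = 1" using t by auto
  then show ?thesis using PP_0 PP_1 by (auto simp: extline_loop_def psiE_def)
qed

lemma cs1: "(cos (x::real))^2 + (sin x)^2 = 1" by (rule sin_cos_squared_add2)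

lemma wind_E: "winding_number (psiE \<circ> extline_loop) 0 = 1"
proof -
  have "winding_number (psiE \<circ> extline_loop) 0 = winding_number PP 0"
    by (rule winding_number_cong) (use loop_PP in simp)
  also have "\<dots> = winding_number (circlepath 0 1) 0"
  proof (rule winding_number_loops_linear_eq)
    show "path (circlepath 0 1)" by simp
    show "pathfinish (circlepath 0 1) = pathstart (circlepath 0 1)" by simp
    show "pathfinish PP = pathstart PP" by (simp add: pathfinish_def pathstart_def PP_0 PP_1)
    show "path PP" unfolding path_def PP_def using Dn_ne[OF cs1]
      by (auto intro!: continuous_intros)
    fix t :: real assume t: "t \<in> {0..1}"
    define c where "c = cos (pi*(t-1/2))"
    define s where "s = sin (pi*(t-1/2))"
    have cs: "c^2 + s^2 = 1" unfolding c_def s_def by (rule cs1)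
    have PPt: "PP t = - (complex_of_real c + \<i> * complex_of_real (2 * s)) / (complex_of_real c - \<i> * complex_of_real (2 * s))"
      unfolding PP_def c_def s_def ..
    have ct: "circlepath 0 1 t = - ((complex_of_real c + \<i> * complex_of_real s)^2)"
      unfolding circ01 c_def s_def ..
    have D: "complex_of_real c - \<i> * complex_of_real (2 * s) \<noteq> 0" by (rule Dn_ne[OF cs])
    have N: "complex_of_real c + \<i> * complex_of_real (2 * s) \<noteq> 0" by (rule Nm_ne[OF cs])
    show "0 \<notin> closed_segment (circlepath 0 1 t) (PP t)"
    proof (rule seg)
      show "PP t \<noteq> 0" unfolding PPt using D N by simp
      fix k :: real assume k: "k \<ge> 0"
      show "circlepath 0 1 t \<noteq> - of_real k * PP t"
      proof
        assume a: "circlepath 0 1 t = - of_real k * PP t"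
        have "- ((complex_of_real c + \<i> * complex_of_real s)^2) * (complex_of_real c - \<i> * complex_of_real (2 * s))
            = (- of_real k * PP t) * (complex_of_real c - \<i> * complex_of_real (2 * s))"
          using a unfolding ct by simp
        also have "\<dots> = complex_of_real k * (complex_of_real c + \<i> * complex_of_real (2 * s))"
          unfolding PPt using D by simp (simp add: algebra_simps)
        finally show False using seg_contra[OF cs k] by blast
      qed
    qed
  qed
  also have "\<dots> = 1" by (rule winding_number_circlepath) simp
  finally show ?thesis .
qed

lemma part_E: "conj_rot_inf (khk_inf e) (rho_plus e)"
  unfolding conj_rot_inf_def using homeo_E wind_E conj_E by blast


lemma curve0: "curve 0 = {(0, 0)}"
proof -
  have "x^2 + y^2 = 0 \<longleftrightarrow> x = 0 \<and> y = 0" for x y :: real by (simp add: sum_power2_eq_zero_iff)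
  then show ?thesis unfolding curve_def by auto
qed

lemma curvem1: "curve (-1) = {(0, -1)}"
proof (rule set_eqI)
  fix p :: "real \<times> real"
  obtain x y where p: "p = (x, y)" by (cases p)
  have e: "x^2 + y^2 - (-1)*(1 + 2*y) = x^2 + (y+1)^2" by (simp add: power2_eq_square algebra_simps)
  have "p \<in> curve (-1) \<longleftrightarrow> x^2 + y^2 - (-1)*(1 + 2*y) = 0" unfolding p curve_def by simp
  also have "\<dots> \<longleftrightarrow> x^2 + (y+1)^2 = 0" unfolding e ..
  also have "\<dots> \<longleftrightarrow> x = 0 \<and> y + 1 = 0" by (rule sum_power2_eq_zero_iff)
  also have "\<dots> \<longleftrightarrow> p \<in> {(0, -1)}" unfolding p by auto
  finally show "p \<in> curve (-1) \<longleftrightarrow> p \<in> {(0, -1)}" .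
qed

lemma khk00: "khk e (0, 0) = (0, 0)"
  by (simp add: khk_def Let_def)

lemma khk0m1: "khk e (0, -1) = (0, -1)"
proof -
  have d: "khk_den e 0 (-1) = 1 + e^2" by (simp add: khk_den_def power2_eq_square)
  have p: "1 + e^2 \<noteq> 0" by (smt (verit) zero_le_power2)
  show ?thesis unfolding khk_def Let_def using d p by (simp add: power2_eq_square field_simps)
qed

theorem proposition9:
  fixes e :: real
  shows "(\<forall>h::real. h > 0 \<longrightarrow>
            conj_rot_circle (curve h) (khk e) (rho_plus e) (0, h) (sqrt (h^2 + h)))
       \<and> (\<forall>h::real. h < -1 \<longrightarrow>
            conj_rot_circle (curve h) (khk e) (rho_minus e) (0, h) (sqrt (h^2 + h)))
       \<and> curve 0 = {(0, 0)} \<and> khk e (0, 0) = (0, 0)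
       \<and> curve (-1) = {(0, -1)} \<and> khk e (0, -1) = (0, -1)
       \<and> (\<forall>x. khk_den e x (-1/2) \<noteq> 0 \<longrightarrow> snd (khk e (x, -1/2)) = -1/2)
       \<and> conj_rot_inf (khk_inf e) (rho_plus e)"
  using part_P part_M curve0 khk00 curvem1 khk0m1 snd_line part_E by blast


end
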